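(* Let $K$ be a finite extension of $\mathbb{Q}_p$ with absolute value $|\cdot|_K$, let $X\subseteq K$ be a finite nonempty set, and let $\mathscr{C}$ be a verticial clustering of $X$. For each $C\in\mathscr{C}$ let $a_C\in K$ be a centre of $C$, and set ${\bf a}=(a_C)_{C\in\mathscr{C}}$. Define $$\mathrm{Intra}(\mathscr{C})=\frac{1}{|X|}\sum_{C\in\mathscr{C}}\sum_{x\in C}|x-a_C|_K,\qquad \mathrm{Inter}(\mathscr{C})=\min_{C\neq C'\in\mathscr{C}}|a_C-a_{C'}|_K .$$ Then $\mathrm{Intra}(\mathscr{C})$ and $\mathrm{Inter}(\mathscr{C})$ do not depend on the choice of the cluster centres ${\bf a}$: any two families of centres give the same values.
   Context: A clustering of a finite set $X\subseteq K$ is a partition $\mathscr{C}$ of $X$ into nonempty clusters. For a cluster $C$, let $\mathbb{D}_C$ denote the smallest closed disk $\{y\in K: |y-b|_K\le r\}$ in $K$ containing $C$. The clustering is verticial if every cluster $C\in\mathscr{C}$ corresponds to a vertex of the dendrogram of $X$, i.e. $C=X\cap\mathbb{D}_C$. Given a clustering $\mathscr{C}$ and a family ${\bf a}=(a_C)_{C\in\mathscr{C}}$ of points of $K$, put $E(\mathscr{C},{\bf a})=\sum_{C\in\mathscr{C}}\sum_{x\in C}|x-a_C|_K$. A family of centres of $\mathscr{C}$ is a family ${\bf a}$ minimising $E(\mathscr{C},{\bf a})$ for the given clustering $\mathscr{C}$; equivalently, each $a_C$ minimises $a\mapsto\sum_{x\in C}|x-a|_K$ over $a\in K$. *)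

theory Defs
  imports Complex_Main "HOL-Computational_Algebra.Primes"
begin

definition abs_value :: "('k::field \<Rightarrow> real) \<Rightarrow> bool" where
  "abs_value v \<longleftrightarrow> (\<forall>x. 0 \<le> v x) \<and> (\<forall>x. v x = 0 \<longleftrightarrow> x = 0)
     \<and> (\<forall>x y. v (x * y) = v x * v y) \<and> (\<forall>x y. v (x + y) \<le> v x + v y)"

definition ultrametric_av :: "('k::field \<Rightarrow> real) \<Rightarrow> bool" where
  "ultrametric_av v \<longleftrightarrow> (\<forall>x y. v (x + y) \<le> max (v x) (v y))"

definition av_cauchy :: "('k::field \<Rightarrow> real) \<Rightarrow> (nat \<Rightarrow> 'k) \<Rightarrow> bool" where
  "av_cauchy v s \<longleftrightarrow> (\<forall>e>0. \<exists>N. \<forall>m\<ge>N. \<forall>n\<ge>N. v (s m - s n) < e)"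

definition av_converges :: "('k::field \<Rightarrow> real) \<Rightarrow> (nat \<Rightarrow> 'k) \<Rightarrow> 'k \<Rightarrow> bool" where
  "av_converges v s l \<longleftrightarrow> (\<forall>e>0. \<exists>N. \<forall>n\<ge>N. v (s n - l) < e)"

text \<open>A field K of characteristic 0 with an absolute value v is (up to isomorphism of valued
  fields) a finite extension of Q_p with an absolute value extending (a power of) the p-adic one
  iff v is a non-archimedean absolute value with v p < 1, K is complete for v, and K is locally
  compact (every bounded sequence in the closed unit ball has a Cauchy subsequence).\<close>

definition finite_ext_Qp :: "nat \<Rightarrow> ('k::field \<Rightarrow> real) \<Rightarrow> bool" where
  "finite_ext_Qp p v \<longleftrightarrow> prime p
     \<and> (\<forall>n::nat. 0 < n \<longrightarrow> v (of_nat n) \<noteq> 0)  \<comment> \<open>characteristic 0\<close>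
     \<and> abs_value v \<and> ultrametric_av v
     \<and> v (of_nat p) < 1
     \<and> (\<forall>s. av_cauchy v s \<longrightarrow> (\<exists>l. av_converges v s l))
     \<and> (\<forall>s. (\<forall>n. v (s n) \<le> 1) \<longrightarrow> (\<exists>g::nat \<Rightarrow> nat. strict_mono g \<and> av_cauchy v (s \<circ> g)))"

definition clustering :: "'k set \<Rightarrow> 'k set set \<Rightarrow> bool" where
  "clustering X \<C> \<longleftrightarrow> (\<forall>C\<in>\<C>. C \<noteq> {}) \<and> \<Union>\<C> = X
     \<and> (\<forall>C\<in>\<C>. \<forall>C'\<in>\<C>. C \<noteq> C' \<longrightarrow> C \<inter> C' = {})"

definition closed_disk :: "('k::field \<Rightarrow> real) \<Rightarrow> 'k \<Rightarrow> real \<Rightarrow> 'k set" where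
  "closed_disk v b r = {y. v (y - b) \<le> r}"

definition is_closed_disk :: "('k::field \<Rightarrow> real) \<Rightarrow> 'k set \<Rightarrow> bool" where
  "is_closed_disk v D \<longleftrightarrow> (\<exists>b r. 0 \<le> r \<and> D = closed_disk v b r)"

definition smallest_disk :: "('k::field \<Rightarrow> real) \<Rightarrow> 'k set \<Rightarrow> 'k set" where
  "smallest_disk v C = (THE D. is_closed_disk v D \<and> C \<subseteq> D
      \<and> (\<forall>D'. is_closed_disk v D' \<and> C \<subseteq> D' \<longrightarrow> D \<subseteq> D'))"

definition verticial :: "('k::field \<Rightarrow> real) \<Rightarrow> 'k set \<Rightarrow> 'k set set \<Rightarrow> bool" where
  "verticial v X \<C> \<longleftrightarrow> clustering X \<C> \<and> (\<forall>C\<in>\<C>. C = X \<inter> smallest_disk v C)"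

definition energy :: "('k::field \<Rightarrow> real) \<Rightarrow> 'k set set \<Rightarrow> ('k set \<Rightarrow> 'k) \<Rightarrow> real" where
  "energy v \<C> a = (\<Sum>C\<in>\<C>. \<Sum>x\<in>C. v (x - a C))"

definition family_of_centres :: "('k::field \<Rightarrow> real) \<Rightarrow> 'k set set \<Rightarrow> ('k set \<Rightarrow> 'k) \<Rightarrow> bool" where
  "family_of_centres v \<C> a \<longleftrightarrow> (\<forall>b. energy v \<C> a \<le> energy v \<C> b)"

definition intra :: "('k::field \<Rightarrow> real) \<Rightarrow> 'k set \<Rightarrow> 'k set set \<Rightarrow> ('k set \<Rightarrow> 'k) \<Rightarrow> real" where
  "intra v X \<C> a = energy v \<C> a / real (card X)"

definition inter :: "('k::field \<Rightarrow> real) \<Rightarrow> 'k set set \<Rightarrow> ('k set \<Rightarrow> 'k) \<Rightarrow> real" where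
  "inter v \<C> a = Min {v (a C - a C') | C C'. C \<in> \<C> \<and> C' \<in> \<C> \<and> C \<noteq> C'}"

end

theory Submission
  imports Defs
begin

lemma av_basic:
  assumes "abs_value v"
  shows "v 0 = 0" "v (-x) = v x" "v (x - y) = v (y - x)" "0 \<le> v x"
proof -
  have m: "\<And>x y. v (x * y) = v x * v y" and z: "\<And>x. v x = 0 \<longleftrightarrow> x = 0"
    and nn: "\<And>x. 0 \<le> v x" using assms unfolding abs_value_def by auto
  show "v 0 = 0" using z by simp
  show "0 \<le> v x" using nn by simp
  have "v 1 = v 1 * v 1" using m[of 1 1] by simp
  moreover have "v 1 \<noteq> 0" using z by simp
  ultimately have v1: "v 1 = 1" by (metis mult_cancel_left2)
  have "v (-1) * v (-1) = 1" using m[of "-1" "-1"] v1 by simp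
  hence "v (-1) = 1" using nn[of "-1"]
    by (metis abs_of_nonneg abs_square_eq_1 power2_eq_square)
  hence neg: "\<And>x. v (-x) = v x" using m[of "-1"] by (metis mult_1 mult_minus1)
  show "v (-x) = v x" by (rule neg)
  show "v (x - y) = v (y - x)" using neg[of "x - y"] by simp
qed

lemma av_strict:
  assumes "abs_value v" "ultrametric_av v" "v y < v x"
  shows "v (x + y) = v x"
proof -
  have u: "\<And>x y. v (x + y) \<le> max (v x) (v y)" using assms(2) unfolding ultrametric_av_def by auto
  have "v x = v ((x + y) + (- y))" by simp
  also have "\<dots> \<le> max (v (x + y)) (v y)" using u[of "x+y" "-y"] av_basic(2)[OF assms(1)] by simp
  finally have "v x \<le> v (x + y)" using assms(3) by linarith
  moreover have "v (x + y) \<le> v x" using u[of x y] assms(3) by simp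
  ultimately show ?thesis by simp
qed

lemma av_tri:
  assumes "ultrametric_av v"
  shows "v (x - z) \<le> max (v (x - y)) (v (y - z))"
proof -
  have "x - z = (x - y) + (y - z)" by simp
  thus ?thesis using assms unfolding ultrametric_av_def by metis
qed

lemma smallest_disk_props:
  assumes av: "abs_value v" and um: "ultrametric_av v" and fin: "finite C" and ne: "C \<noteq> {}"
  shows "is_closed_disk v (smallest_disk v C) \<and> C \<subseteq> smallest_disk v C"
proof -
  obtain c where c: "c \<in> C" using ne by auto
  define r where "r = Max ((\<lambda>x. v (x - c)) ` C)"
  define D where "D = closed_disk v c r"
  have rx: "\<And>x. x \<in> C \<Longrightarrow> v (x - c) \<le> r" unfolding r_def using fin by auto
  have r0: "0 \<le> r" using rx[OF c] av_basic(4)[OF av] by (meson order_trans)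
  obtain x0 where x0: "x0 \<in> C" "r = v (x0 - c)"
    unfolding r_def using fin ne by (metis (mono_tags, lifting) Max_in finite_imageI imageE image_is_empty)
  let ?P = "\<lambda>D. is_closed_disk v D \<and> C \<subseteq> D \<and> (\<forall>D'. is_closed_disk v D' \<and> C \<subseteq> D' \<longrightarrow> D \<subseteq> D')"
  have min: "D \<subseteq> D'" if h1: "is_closed_disk v D'" and h2: "C \<subseteq> D'" for D'
  proof -
    obtain b r' where br: "0 \<le> r'" "D' = closed_disk v b r'" using h1 by (meson is_closed_disk_def)
    have cb: "v (c - b) \<le> r'" using that(2) c br unfolding closed_disk_def by auto
    have "v (x0 - b) \<le> r'" using that(2) x0 br unfolding closed_disk_def by auto
    hence "r \<le> r'" using x0 av_tri[OF um, of x0 c b] cb av_basic(3)[OF av, of c b]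
      by (smt (verit) av_tri um)
    show ?thesis
    proof
      fix y assume "y \<in> D"
      hence "v (y - c) \<le> r" unfolding D_def closed_disk_def by auto
      hence "v (y - b) \<le> r'" using av_tri[OF um, of y b c] cb \<open>r \<le> r'\<close> by linarith
      thus "y \<in> D'" using br unfolding closed_disk_def by auto
    qed
  qed
  have PD: "?P D" using min rx r0 unfolding D_def is_closed_disk_def closed_disk_def by auto
  have "smallest_disk v C = D"
    unfolding smallest_disk_def
  proof (rule the_equality)
    show "?P D" by (rule PD)
  next
    fix D' assume "?P D'"
    thus "D' = D" using PD by blast
  qed
  thus ?thesis using PD by simp
qed

lemma centre_in_disk:
  assumes av: "abs_value v" and um: "ultrametric_av v"
    and fc: "family_of_centres v \<C> a" and finC: "finite \<C>" and C: "C \<in> \<C>"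
    and fin: "finite C" and ne: "C \<noteq> {}" and sub: "C \<subseteq> closed_disk v c r"
  shows "a C \<in> closed_disk v c r"
proof (rule ccontr)
  assume "a C \<notin> closed_disk v c r"
  hence far: "r < v (a C - c)" unfolding closed_disk_def by auto
  define a' where "a' = a(C := c)"
  have lt: "v (x - c) < v (x - a C)" if "x \<in> C" for x
  proof -
    have xc: "v (x - c) \<le> r" using sub that unfolding closed_disk_def by auto
    have "x - a C = (c - a C) + (x - c)" by simp
    hence "v (x - a C) = v (c - a C)"
      using av_strict[OF av um, of "x - c" "c - a C"] xc far av_basic(3)[OF av, of c "a C"] by simp
    thus ?thesis using xc far av_basic(3)[OF av, of c "a C"] by simp
  qed
  have "(\<Sum>x\<in>C. v (x - c)) < (\<Sum>x\<in>C. v (x - a C))"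
    using sum_strict_mono[OF fin ne lt] by simp
  moreover have "(\<Sum>C'\<in>\<C> - {C}. \<Sum>x\<in>C'. v (x - (a(C := c)) C')) = (\<Sum>C'\<in>\<C> - {C}. \<Sum>x\<in>C'. v (x - a C'))"
    by (rule sum.cong) auto
  ultimately have "energy v \<C> a' < energy v \<C> a"
    unfolding energy_def a'_def
    using sum.remove[OF finC C, of "\<lambda>C'. \<Sum>x\<in>C'. v (x - (a(C := c)) C')"]
      sum.remove[OF finC C, of "\<lambda>C'. \<Sum>x\<in>C'. v (x - a C')"]
    by (simp cong: sum.cong)
  thus False using fc unfolding family_of_centres_def by (meson not_le)
qed

lemma disks_nested:
  assumes um: "ultrametric_av v" and z1: "z \<in> closed_disk v b r" and z2: "z \<in> closed_disk v b' r'"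
    and le: "r \<le> r'" and av: "abs_value v"
  shows "closed_disk v b r \<subseteq> closed_disk v b' r'"
proof
  fix y assume y: "y \<in> closed_disk v b r"
  have t: "v (y - z) \<le> max (v (y - b)) (v (b - z))" by (rule av_tri[OF um])
  have "v (y - b) \<le> r" "v (z - b) \<le> r" using y z1 unfolding closed_disk_def by auto
  hence "v (y - z) \<le> r" using t av_basic(3)[OF av, of z b] by simp
  moreover have t2: "v (y - b') \<le> max (v (y - z)) (v (z - b'))" by (rule av_tri[OF um])
  moreover have "v (z - b') \<le> r'" using z2 unfolding closed_disk_def by auto
  ultimately have "v (y - b') \<le> r'" using le by simp
  thus "y \<in> closed_disk v b' r'" unfolding closed_disk_def by auto
qed

lemma disjoint_dist:
  assumes av: "abs_value v" and um: "ultrametric_av v" and r: "0 \<le> r" "0 \<le> r'"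
    and dj: "closed_disk v b r \<inter> closed_disk v b' r' = {}"
    and u: "u \<in> closed_disk v b r" and u': "u' \<in> closed_disk v b' r'"
  shows "v (u - u') = v (b - b')"
proof -
  have bD: "b \<in> closed_disk v b r" and bD': "b' \<in> closed_disk v b' r'"
    using r av_basic(1)[OF av] unfolding closed_disk_def by auto
  have "b' \<notin> closed_disk v b r" using dj bD' by blast
  hence g1: "r < v (b - b')" using av_basic(3)[OF av, of b b'] unfolding closed_disk_def by simp
  have g2: "r' < v (b - b')" using dj bD unfolding closed_disk_def by fastforce
  have "v ((u - b) + (b' - u')) \<le> max (v (u - b)) (v (b' - u'))"
    using um unfolding ultrametric_av_def by blast
  moreover have "v (u - b) \<le> r" "v (b' - u') \<le> r'" using u u' av_basic(3)[OF av, of b' u']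
    unfolding closed_disk_def by auto
  ultimately have "v ((u - b) + (b' - u')) < v (b - b')" using g1 g2 by linarith
  moreover have "u - u' = (b - b') + ((u - b) + (b' - u'))" by simp
  ultimately show ?thesis using av_strict[OF av um] by metis
qed

theorem lemma2:
  fixes p :: nat and v :: "'k::field \<Rightarrow> real" and X :: "'k set" and \<C> :: "'k set set"
    and a b :: "'k set \<Rightarrow> 'k"
  assumes "finite_ext_Qp p v"
    and "finite X" and "X \<noteq> {}"
    and "verticial v X \<C>"
    and "family_of_centres v \<C> a"
    and "family_of_centres v \<C> b"
  shows "intra v X \<C> a = intra v X \<C> b \<and> inter v \<C> a = inter v \<C> b"
proof -
  have av: "abs_value v" and um: "ultrametric_av v" using assms(1) unfolding finite_ext_Qp_def by auto
  have E: "energy v \<C> a = energy v \<C> b" using assms(5,6) unfolding family_of_centres_def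
    by (meson order_antisym)
  have cl: "clustering X \<C>" and vt: "\<And>C. C \<in> \<C> \<Longrightarrow> C = X \<inter> smallest_disk v C"
    using assms(4) unfolding verticial_def by auto
  have subX: "\<And>C. C \<in> \<C> \<Longrightarrow> C \<subseteq> X" and neC: "\<And>C. C \<in> \<C> \<Longrightarrow> C \<noteq> {}"
    and dis: "\<And>C C'. C \<in> \<C> \<Longrightarrow> C' \<in> \<C> \<Longrightarrow> C \<noteq> C' \<Longrightarrow> C \<inter> C' = {}"
    using cl unfolding clustering_def by auto
  have finC: "finite \<C>" using subX assms(2) by (meson Pow_iff finite_Pow_iff rev_finite_subset subsetI)
  have finc: "\<And>C. C \<in> \<C> \<Longrightarrow> finite C" using subX assms(2) finite_subset by blast
  have SD: "\<And>C. C \<in> \<C> \<Longrightarrow> \<exists>c r. 0 \<le> r \<and> smallest_disk v C = closed_disk v c r \<and> C \<subseteq> closed_disk v c r"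
    using smallest_disk_props[OF av um] finc neC unfolding is_closed_disk_def by metis
  have key: "v (a C - a C') = v (b C - b C')" if C: "C \<in> \<C>" "C' \<in> \<C>" "C \<noteq> C'" for C C'
  proof -
    obtain c r where cr: "0 \<le> r" "smallest_disk v C = closed_disk v c r" "C \<subseteq> closed_disk v c r"
      using SD[OF C(1)] by blast
    obtain c' r' where cr': "0 \<le> r'" "smallest_disk v C' = closed_disk v c' r'" "C' \<subseteq> closed_disk v c' r'"
      using SD[OF C(2)] by blast
    have dj: "closed_disk v c r \<inter> closed_disk v c' r' = {}"
    proof (rule ccontr)
      assume "closed_disk v c r \<inter> closed_disk v c' r' \<noteq> {}"
      then obtain z where z: "z \<in> closed_disk v c r" "z \<in> closed_disk v c' r'" by auto
      have "C \<subseteq> C' \<or> C' \<subseteq> C"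
      proof (cases "r \<le> r'")
        case True
        hence "closed_disk v c r \<subseteq> closed_disk v c' r'" using disks_nested[OF um z] av by blast
        thus ?thesis using vt[OF C(1)] vt[OF C(2)] cr cr' by blast
      next
        case False
        hence "closed_disk v c' r' \<subseteq> closed_disk v c r" using disks_nested[OF um z(2) z(1)] av by simp
        thus ?thesis using vt[OF C(1)] vt[OF C(2)] cr cr' by blast
      qed
      thus False using dis[OF C] neC[OF C(1)] neC[OF C(2)] by blast
    qed
    have ins: "\<And>f. family_of_centres v \<C> f \<Longrightarrow> f C \<in> closed_disk v c r \<and> f C' \<in> closed_disk v c' r'"
      using centre_in_disk[OF av um _ finC] C finc neC cr cr' by blast
    have "v (a C - a C') = v (c - c')"
      using disjoint_dist[OF av um cr(1) cr'(1) dj] ins[OF assms(5)] by blast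
    moreover have "v (b C - b C') = v (c - c')"
      using disjoint_dist[OF av um cr(1) cr'(1) dj] ins[OF assms(6)] by blast
    ultimately show ?thesis by simp
  qed
  have "{v (a C - a C') | C C'. C \<in> \<C> \<and> C' \<in> \<C> \<and> C \<noteq> C'}
      = {v (b C - b C') | C C'. C \<in> \<C> \<and> C' \<in> \<C> \<and> C \<noteq> C'}"
    using key by metis
  thus ?thesis using E unfolding intra_def inter_def by simp
qed

end
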